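(* For $n\ge1$ let $u_n=\frac{1}{2n}\left(1-\frac{1}{2n}\right)^{2n-1}$ and $v_n=\frac{1}{2n+1}\left(1-\frac{1}{2n+1}\right)^{2n+1}$. Then for all $n\ge1$, $$\sum_{i=1}^n (2i-1)^{2i-1}u_n^{2i-1}<1\qquad\text{and}\qquad \sum_{i=1}^n (2i)^{2i+1}v_n^{2i-1}<1.$$ *)

theory Defs
  imports Complex_Main
begin

end

theory Submission
  imports Defs
begin

lemma exp_m1_le: "exp (-1::real) \<le> 3/8"
proof -
  have "(1 + 1/40::real)^40 \<le> exp (1/40) ^ 40"
    using exp_ge_add_one_self[of "1/40::real"] by (intro power_mono) auto
  also have "\<dots> = exp (of_nat 40 * (1/40))" by (simp only: exp_of_nat_mult)
  finally have h: "(1 + 1/40::real)^40 \<le> exp 1" by simp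
  have "(8/3::real) \<le> (1 + 1/40)^40" by (simp add: power_divide)
  with h have "8/3 \<le> exp (1::real)" by linarith
  thus ?thesis by (simp add: exp_minus field_simps)
qed

lemma d_le: assumes "M \<ge> (1::nat)" shows "(1 - 1/real M)^M \<le> (3/8::real)"
proof -
  have "(1 - 1/real M)^M \<le> exp (-1/real M)^M"
    apply (rule power_mono) using exp_ge_add_one_self[of "-1/real M"] assms by (auto simp: field_simps)
  also have "\<dots> = exp (of_nat M * (-1/real M))" by (simp only: exp_of_nat_mult)
  also have "\<dots> = exp (-1)" using assms by simp
  finally show ?thesis using exp_m1_le by linarith
qed

definition PP :: "real \<Rightarrow> real" where
 "PP x = 512/55 * x^3 + 13824/3025 * x^2 + 1009152/166375 * x + 29864448/9150625"

lemma tele: "(\<Sum>i = 1..n. (2 * real i)^3 * (3/8::real)^(2*i-1)) = 3/8 * PP 1 - (3/8)^(2*n+1) * PP (real n + 1)"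
proof (induction n)
  case 0 then show ?case by (simp add: PP_def)
next
  case (Suc n)
  have e: "(3/8::real)^(2*Suc n - 1) = (3/8)^(2*n+1)" by simp
  have e2: "(3/8::real)^(2*Suc n + 1) = (3/8)^(2*n+1) * (9/64)" by (simp add: power_add power2_eq_square)
  have pid: "PP (real n + 1) - 9/64 * PP (real n + 2) = 8 * (real n + 1)^3"
    unfolding PP_def by (simp add: field_simps power2_eq_square power3_eq_cube)
  have h8: "8 * (1 + real n) ^ 3 = (2 * real n + 2) ^ 3" by (simp add: power3_eq_cube algebra_simps)
  have "(\<Sum>i = 1..Suc n. (2 * real i)^3 * (3/8::real)^(2*i-1))
     = (\<Sum>i = 1..n. (2 * real i)^3 * (3/8::real)^(2*i-1)) + 8 * (real n + 1)^3 * (3/8)^(2*n+1)"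
    by (simp add: e power_mult_distrib add.commute)
  also have "\<dots> = 3/8 * PP 1 - (3/8)^(2*n+1) * (PP (real n + 1) - 8 * (real n + 1)^3)"
    by (simp only: Suc.IH) (simp add: right_diff_distrib)
  also have "\<dots> = 3/8 * PP 1 - (3/8)^(2*n+1) * (9/64) * PP (real n + 2)"
    using pid by simp
  also have "\<dots> = 3/8 * PP 1 - (3/8)^(2*Suc n+1) * PP (real (Suc n) + 1)"
    by (simp add: e2 add.commute)
  finally show ?case .
qed

lemma tele_le: "(\<Sum>i = 1..n. (2 * real i)^3 * (3/8::real)^(2*i-1)) < 9"
proof -
  have "PP (real n + 1) \<ge> 0" by (simp add: PP_def)
  hence "(3/8)^(2*n+1) * PP (real n + 1) \<ge> 0" by simp
  moreover have "3/8 * PP 1 < 9" by (simp add: PP_def)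
  ultimately show ?thesis unfolding tele by linarith
qed

lemma geo_half: "(\<Sum>i = 1..n. (1/2::real)^i) = 1 - (1/2)^n"
  by (induction n) (auto simp: field_simps)

lemma c_le: assumes "m \<ge> (2::nat)" shows "(1 - 1/real m)^(m-1) \<le> (1/2::real)"
proof -
  define N where "N = m - 1"
  have N1: "N \<ge> 1" and mN: "real m = real N + 1" using assms by (auto simp: N_def)
  have b: "1 + real N * (1/real N) \<le> (1 + 1/real N)^N"
  proof (rule Bernoulli_inequality)
    have "(0::real) \<le> 1/real N" by simp
    thus "-1 \<le> 1/real N" by linarith
  qed
  hence b2: "2 \<le> (1 + 1/real N)^N" using N1 by simp
  have Npos: "real N > 0" using N1 by simp
  have e1: "1 - 1/real m = real N / real m" using mN Npos by (simp add: field_simps)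
  have e2: "1 + 1/real N = real m / real N" using mN Npos by (simp add: field_simps)
  have "(1 - 1/real m) * (1 + 1/real N) = 1" unfolding e1 e2 using mN Npos by simp
  hence "(1 - 1/real m)^N * (1 + 1/real N)^N = 1" by (metis power_mult_distrib power_one)
  moreover have "(1 - 1/real m)^N \<ge> 0" using mN by simp
  ultimately have "(1 - 1/real m)^N * 2 \<le> 1" using b2
    by (metis mult_left_mono)
  thus ?thesis unfolding N_def by simp
qed

lemma part1:
  fixes n :: nat
  assumes "n \<ge> 1"
  defines "u \<equiv> (1 / (2 * real n)) * (1 - 1 / (2 * real n)) ^ (2 * n - 1)"
  shows "(\<Sum>i = 1..n. real (2 * i - 1) ^ (2 * i - 1) * u ^ (2 * i - 1)) < 1"
proof -
  have c: "(1 - 1/real (2*n))^(2*n-1) \<le> (1/2::real)" using c_le[of "2*n"] assms by simp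
  have c0: "(1 - 1/real (2*n))^(2*n-1) \<ge> (0::real)" using assms by simp
  have "(\<Sum>i = 1..n. real (2 * i - 1) ^ (2 * i - 1) * u ^ (2 * i - 1)) \<le> (\<Sum>i = 1..n. (1/2::real)^i)"
  proof (rule sum_mono)
    fix i assume i: "i \<in> {1..n}"
    have k: "real (2*i-1) \<le> 2 * real n" "real (2*i-1) \<ge> 0" using i by auto
    have ku: "real (2*i-1) * u = (real (2*i-1) / (2 * real n)) * (1 - 1/real (2*n))^(2*n-1)"
      unfolding u_def by simp
    have q1: "real (2*i-1) / (2 * real n) \<le> 1" "real (2*i-1) / (2 * real n) \<ge> 0" using k assms by auto
    have "real (2*i-1) * u \<le> 1/2" unfolding ku using mult_mono[OF q1(1) c zero_le_one c0] c by linarith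
    moreover have "real (2*i-1) * u \<ge> 0" unfolding ku using q1 c0 by simp
    ultimately have "(real (2*i-1) * u)^(2*i-1) \<le> (1/2)^(2*i-1)" by (intro power_mono)
    also have "\<dots> \<le> (1/2)^i" using i by (intro power_decreasing) auto
    finally show "real (2 * i - 1) ^ (2 * i - 1) * u ^ (2 * i - 1) \<le> (1/2::real)^i"
      by (simp add: power_mult_distrib)
  qed
  also have "\<dots> < 1" unfolding geo_half by simp
  finally show ?thesis .
qed

lemma part2_big:
  fixes n :: nat
  assumes "n \<ge> 4"
  defines "v \<equiv> (1 / (2 * real n + 1)) * (1 - 1 / (2 * real n + 1)) ^ (2 * n + 1)"
  shows "(\<Sum>i = 1..n. real (2 * i) ^ (2 * i + 1) * v ^ (2 * i - 1)) < 1"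
proof -
  define M where "M = 2 * real n + 1"
  define d where "d = (1 - 1 / M) ^ (2 * n + 1)"
  have M9: "M \<ge> 9" using assms by (simp add: M_def)
  have dq0: "(1 - 1/real (2*n+1))^(2*n+1) \<le> (3/8::real)" by (rule d_le) simp
  have "real (2*n+1) = M" by (simp add: M_def)
  hence dq: "d \<le> 3/8" using dq0 unfolding d_def by simp
  have d0: "d \<ge> 0" unfolding d_def using M9 by simp
  have vd: "v = d / M" unfolding v_def d_def M_def by simp
  have "(\<Sum>i = 1..n. real (2 * i) ^ (2 * i + 1) * v ^ (2 * i - 1))
      \<le> (\<Sum>i = 1..n. (2 * real i)^3 * (3/8::real)^(2*i-1) / M)"
  proof (rule sum_mono)
    fix i assume i: "i \<in> {1..n}"
    define k where "k = 2 * real i"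
    define j where "j = 2 * i - 1"
    have j1: "j \<ge> 1" and ji: "2 * i + 1 = j + 2" using i by (auto simp: j_def)
    have k0: "k \<ge> 0" and kM: "k \<le> M" using i by (auto simp: k_def M_def)
    have r0: "k / M \<ge> 0" and r1: "k / M \<le> 1" using k0 kM M9 by auto
    have "real (2 * i) ^ (2 * i + 1) * v ^ (2 * i - 1) = k^2 * ((k / M)^j * d^j)"
      unfolding ji vd k_def j_def[symmetric] by (simp add: power_add power_divide field_simps power2_eq_square)
    also have "\<dots> \<le> k^2 * ((k / M) * (3/8)^j)"
    proof -
      have "(k/M)^j = (k/M) * (k/M)^(j-1)" using j1 by (metis Suc_diff_1 less_le_trans power_Suc zero_less_one)
      also have "\<dots> \<le> k/M" using mult_left_le[OF power_le_one[OF r0 r1] r0] .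
      finally have a: "(k/M)^j \<le> k/M" .
      have b: "d^j \<le> (3/8)^j" using d0 dq by (intro power_mono)
      show ?thesis using mult_mono[OF a b] r0 d0 by (intro mult_left_mono) auto
    qed
    also have "\<dots> = (2 * real i)^3 * (3/8::real)^(2*i-1) / M"
      by (simp add: k_def j_def power3_eq_cube power2_eq_square)
    finally show "real (2 * i) ^ (2 * i + 1) * v ^ (2 * i - 1) \<le> (2 * real i)^3 * (3/8::real)^(2*i-1) / M" .
  qed
  also have "\<dots> = (\<Sum>i = 1..n. (2 * real i)^3 * (3/8::real)^(2*i-1)) / M"
    by (simp add: sum_divide_distrib)
  also have "\<dots> < 1" using tele_le[of n] M9 by simp
  finally show ?thesis .
qed

lemma part2_small:
  fixes n :: nat
  assumes "n \<ge> 1" "n \<le> 3"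
  defines "v \<equiv> (1 / (2 * real n + 1)) * (1 - 1 / (2 * real n + 1)) ^ (2 * n + 1)"
  shows "(\<Sum>i = 1..n. real (2 * i) ^ (2 * i + 1) * v ^ (2 * i - 1)) < 1"
proof -
  have "n = 1 \<or> n = 2 \<or> n = 3" using assms by auto
  thus ?thesis
  proof (elim disjE)
    assume "n = 1" thus ?thesis unfolding v_def by (simp add: power_divide)
  next
    assume "n = 2" thus ?thesis unfolding v_def by (simp add: numeral_eq_Suc power_divide)
  next
    assume "n = 3" thus ?thesis unfolding v_def by (simp add: numeral_eq_Suc power_divide)
  qed
qed


theorem lemma8p5:
  fixes n :: nat
  assumes "n \<ge> 1"
  defines "u \<equiv> (1 / (2 * real n)) * (1 - 1 / (2 * real n)) ^ (2 * n - 1)"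
      and "v \<equiv> (1 / (2 * real n + 1)) * (1 - 1 / (2 * real n + 1)) ^ (2 * n + 1)"
  shows "(\<Sum>i = 1..n. real (2 * i - 1) ^ (2 * i - 1) * u ^ (2 * i - 1)) < 1
       \<and> (\<Sum>i = 1..n. real (2 * i) ^ (2 * i + 1) * v ^ (2 * i - 1)) < 1"
proof
  show "(\<Sum>i = 1..n. real (2 * i - 1) ^ (2 * i - 1) * u ^ (2 * i - 1)) < 1"
    using part1[OF assms(1), folded u_def] .
  show "(\<Sum>i = 1..n. real (2 * i) ^ (2 * i + 1) * v ^ (2 * i - 1)) < 1"
  proof (cases "n \<ge> 4")
    case True show ?thesis using part2_big[OF True, folded v_def] .
  next
    case False then show ?thesis using part2_small[OF assms(1), folded v_def] by simp
  qed
qed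

end
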